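(* Let $\mathbf{X}$ be a set of discrete random variables with sample space $\Omega(\mathbf{X})$, let $O$ be a positive unital circuit over $\mathbf{X}$ and let $\rho$ be a density matrix of the same size as $O(\mathbf{x})$. Then $p_{\mathbf{X}}(\mathbf{x})=\operatorname{Tr}[O(\mathbf{x})\rho]$ is a probability distribution on $\Omega(\mathbf{X})$, i.e. $p_{\mathbf{X}}(\mathbf{x})\ge 0$ for all $\mathbf{x}\in\Omega(\mathbf{X})$ and $\sum_{\mathbf{x}\in\Omega(\mathbf{X})}p_{\mathbf{X}}(\mathbf{x})=1$.
   Context: A density matrix is a PSD complex matrix of trace one. A POVM is a finite family of PSD matrices summing to the identity. A quantum operation from $d\times d$ to $d'\times d'$ matrices is $\Phi(A)=\sum_j K_jAK_j^*$ with $d'\times d$ matrices $K_j$, $\sum_jK_j^*K_j\le\mathbb{1}$ (Loewner order); it is unital if $\Phi(\mathbb{1}_d)=\mathbb{1}_{d'}$. A partition circuit over $\mathbf{X}=\{X_0,\dots,X_{N-1}\}$ is a rooted binary tree whose leaves are in bijection with the variables (leaf $k$ carries $X_k$ with finite sample space $\Omega(X_k)$), each internal unit $k$ having two children $k_l,k_r$; $\mathbf{x}_k$ denotes an assignment to the variables at the leaves below $k$. A positive unital circuit assigns to each leaf $k$ a POVM $\{E_{x_k}\}_{x_k\in\Omega(X_k)}$ and to each internal unit $k$ a unital quantum operation $\Phi_k$, and computes $O_k(\mathbf{x}_k)=E_{x_k}$ at leaves and $O_k(\mathbf{x}_k)=\Phi_k(O_{k_l}(\mathbf{x}_{k_l})\otimes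 O_{k_r}(\mathbf{x}_{k_r}))$ at internal units ($\otimes$ the Kronecker product); $O(\mathbf{x})=O_{\mathrm{root}}(\mathbf{x})$. *)

theory Defs
  imports "Jordan_Normal_Form.Matrix" "HOL-Library.Complex_Order" "HOL-Library.FuncSet"
begin

definition adj :: "complex mat \<Rightarrow> complex mat" where
  "adj A = mat (dim_col A) (dim_row A) (\<lambda>(i,j). cnj (A $$ (j,i)))"

definition psd :: "nat \<Rightarrow> complex mat \<Rightarrow> bool" where
  "psd n A \<longleftrightarrow> A \<in> carrier_mat n n \<and> (\<forall>v \<in> carrier_vec n. 0 \<le> cscalar_prod (A *\<^sub>v v) v)"

definition loewner_le :: "nat \<Rightarrow> complex mat \<Rightarrow> complex mat \<Rightarrow> bool" where
  "loewner_le n A B \<longleftrightarrow> A \<in> carrier_mat n n \<and> B \<in> carrier_mat n n \<and> psd n (B - A)"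

definition mtrace :: "complex mat \<Rightarrow> complex" where
  "mtrace A = (\<Sum>i<dim_row A. A $$ (i,i))"

definition density :: "nat \<Rightarrow> complex mat \<Rightarrow> bool" where
  "density n \<rho> \<longleftrightarrow> psd n \<rho> \<and> mtrace \<rho> = 1"

definition kron :: "complex mat \<Rightarrow> complex mat \<Rightarrow> complex mat" where
  "kron A B = mat (dim_row A * dim_row B) (dim_col A * dim_col B)
     (\<lambda>(i,j). A $$ (i div dim_row B, j div dim_col B) * B $$ (i mod dim_row B, j mod dim_col B))"

definition msum :: "nat \<Rightarrow> nat \<Rightarrow> ('i \<Rightarrow> complex mat) \<Rightarrow> 'i set \<Rightarrow> complex mat" where
  "msum n m f I = mat n m (\<lambda>(i,j). \<Sum>x\<in>I. f x $$ (i,j))"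

definition povm :: "nat \<Rightarrow> 'i set \<Rightarrow> ('i \<Rightarrow> complex mat) \<Rightarrow> bool" where
  "povm d S E \<longleftrightarrow> finite S \<and> (\<forall>x\<in>S. psd d (E x)) \<and> msum d d E S = 1\<^sub>m d"

definition qapply :: "nat \<Rightarrow> complex mat list \<Rightarrow> complex mat \<Rightarrow> complex mat" where
  "qapply d' Ks A = mat d' d' (\<lambda>(i,j). \<Sum>K\<leftarrow>Ks. (K * A * adj K) $$ (i,j))"

definition qop :: "nat \<Rightarrow> nat \<Rightarrow> complex mat list \<Rightarrow> bool" where
  "qop d d' Ks \<longleftrightarrow> (\<forall>K\<in>set Ks. K \<in> carrier_mat d' d) \<and>
     loewner_le d (mat d d (\<lambda>(i,j). \<Sum>K\<leftarrow>Ks. (adj K * K) $$ (i,j))) (1\<^sub>m d)"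

definition unital_qop :: "nat \<Rightarrow> nat \<Rightarrow> complex mat list \<Rightarrow> bool" where
  "unital_qop d d' Ks \<longleftrightarrow> qop d d' Ks \<and> qapply d' Ks (1\<^sub>m d) = 1\<^sub>m d'"

text \<open>Variables are X_0..X_{N-1}, identified with their indices; values are naturals.
  A leaf stores its variable index k, its matrix dimension d and its POVM (value \<Rightarrow> matrix).
  An internal unit stores its output dimension d' and Kraus operators.\<close>
datatype circ =
    CLeaf nat nat "nat \<Rightarrow> complex mat"
  | CNode nat "complex mat list" circ circ

fun cdim :: "circ \<Rightarrow> nat" where
  "cdim (CLeaf k d E) = d"
| "cdim (CNode d Ks l r) = d"

fun leaves :: "circ \<Rightarrow> nat list" where
  "leaves (CLeaf k d E) = [k]"
| "leaves (CNode d Ks l r) = leaves l @ leaves r"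

fun pos_unital :: "(nat \<Rightarrow> nat set) \<Rightarrow> circ \<Rightarrow> bool" where
  "pos_unital \<Omega> (CLeaf k d E) = povm d (\<Omega> k) E"
| "pos_unital \<Omega> (CNode d Ks l r) =
     (pos_unital \<Omega> l \<and> pos_unital \<Omega> r \<and> unital_qop (cdim l * cdim r) d Ks)"

fun ceval :: "circ \<Rightarrow> (nat \<Rightarrow> nat) \<Rightarrow> complex mat" where
  "ceval (CLeaf k d E) x = E (x k)"
| "ceval (CNode d Ks l r) x = qapply d Ks (kron (ceval l x) (ceval r x))"

definition partition_circ :: "nat \<Rightarrow> circ \<Rightarrow> bool" where
  "partition_circ N C \<longleftrightarrow> distinct (leaves C) \<and> set (leaves C) = {..<N}"

end

theory Submission
  imports Defs "HOL-Library.Nat_Bijection"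
begin

definition Qf :: "complex mat \<Rightarrow> nat \<Rightarrow> (nat \<Rightarrow> complex) \<Rightarrow> complex" where
  "Qf A n w = (\<Sum>a<n. \<Sum>b<n. A $$ (a,b) * w b * cnj (w a))"

lemma psd_Qf: assumes "psd n A" shows "0 \<le> Qf A n w"
proof -
  have A: "A \<in> carrier_mat n n" using assms unfolding psd_def by auto
  have "0 \<le> cscalar_prod (A *\<^sub>v vec n w) (vec n w)" using assms unfolding psd_def by auto
  also have "cscalar_prod (A *\<^sub>v vec n w) (vec n w) = Qf A n w"
    using A unfolding Qf_def scalar_prod_def
    by (auto simp: scalar_prod_def atLeast0LessThan sum_distrib_left sum_distrib_right mult_ac intro!: sum.cong)
  finally show ?thesis .
qed

lemma mtrace_mult: assumes "A \<in> carrier_mat n n" "B \<in> carrier_mat n n"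
  shows "mtrace (A*B) = (\<Sum>i<n. \<Sum>j<n. A $$ (i,j) * B $$ (j,i))"
  using assms unfolding mtrace_def scalar_prod_def
  by (auto simp: scalar_prod_def atLeast0LessThan intro!: sum.cong)

lemma kron_index: assumes "i < dim_row A * dim_row B" "j < dim_col A * dim_col B"
  shows "kron A B $$ (i,j) = A $$ (i div dim_row B, j div dim_col B) * B $$ (i mod dim_row B, j mod dim_col B)"
  using assms unfolding kron_def by simp

lemma kron_carrier: "A \<in> carrier_mat n1 n1 \<Longrightarrow> B \<in> carrier_mat n2 n2 \<Longrightarrow> kron A B \<in> carrier_mat (n1*n2) (n1*n2)"
  unfolding kron_def by auto

lemma KMK_index: assumes "K \<in> carrier_mat d n" "M \<in> carrier_mat n n" "i < d" "j < d"
  shows "(K * M * adj K) $$ (i,j) = (\<Sum>q<n. \<Sum>p<n. K $$ (i,p) * M $$ (p,q) * cnj (K $$ (j,q)))"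
  using assms unfolding adj_def scalar_prod_def
  by (auto simp: scalar_prod_def atLeast0LessThan sum_distrib_right intro!: sum.cong)

lemma sum_if_const: "(\<Sum>b\<in>S. if P then g b else 0) = (if P then (\<Sum>b\<in>S. g b) else 0)"
  by auto

definition ee :: "nat \<Rightarrow> nat \<Rightarrow> complex" where "ee i k = (if k = i then 1 else 0)"

lemma Qf_expand: assumes "i < n"
  shows "Qf A n (\<lambda>k. w k + t * ee i k) = Qf A n w + cnj t * (\<Sum>b<n. A $$ (i,b) * w b)
     + t * (\<Sum>a<n. A $$ (a,i) * cnj (w a)) + t * cnj t * A $$ (i,i)"
proof -
  have pt: "A $$ (a,b) * (w b + t * ee i b) * cnj (w a + t * ee i a) =
     A $$ (a,b) * w b * cnj (w a) + (if a = i then cnj t * (A $$ (i,b) * w b) else 0)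
     + (if b = i then t * (A $$ (a,i) * cnj (w a)) else 0)
     + (if a = i then (if b = i then t * cnj t * A $$ (i,i) else 0) else 0)" for a b
    by (auto simp: ee_def algebra_simps)
  show ?thesis unfolding Qf_def pt using assms
    by (simp add: sum.distrib sum_distrib_left sum.delta' sum_if_const)
qed

lemma ee_simps[simp]: "cnj (ee i k) = ee i k" "x * ee i k = (if k = i then x else 0)"
  "ee i k * x = (if k = i then x else 0)"
  by (auto simp: ee_def)

lemma Qf_ee: "j < n \<Longrightarrow> Qf A n (ee j) = A $$ (j,j)"
  unfolding Qf_def by (simp add: sum_if_const)

lemma psd_diag: "psd n A \<Longrightarrow> j < n \<Longrightarrow> 0 \<le> A $$ (j,j)"
  using psd_Qf[of n A "ee j"] Qf_ee[of j n A] by simp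

lemma psd_pair: assumes "psd n A" "i < n" "j < n"
  shows "0 \<le> A $$ (j,j) + cnj t * A $$ (i,j) + t * A $$ (j,i) + t * cnj t * A $$ (i,i)"
proof -
  have "0 \<le> Qf A n (\<lambda>k. ee j k + t * ee i k)" by (rule psd_Qf[OF assms(1)])
  also have "\<dots> = A $$ (j,j) + cnj t * A $$ (i,j) + t * A $$ (j,i) + t * cnj t * A $$ (i,i)"
    using assms by (subst Qf_expand) (simp_all add: Qf_ee sum_if_const)
  finally show ?thesis .
qed

lemma psd_herm: assumes "psd n A" "i < n" "j < n"
  shows "A $$ (j,i) = cnj (A $$ (i,j))"
proof -
  have di: "Im (A $$ (i,i)) = 0" and dj: "Im (A $$ (j,j)) = 0"
    using psd_diag[OF assms(1) assms(2)] psd_diag[OF assms(1) assms(3)]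
    by (auto simp: less_eq_complex_def)
  have 1: "Im (A $$ (j,j) + cnj 1 * A $$ (i,j) + 1 * A $$ (j,i) + 1 * cnj 1 * A $$ (i,i)) = 0"
    using psd_pair[OF assms, of 1] by (simp add: less_eq_complex_def)
  have 2: "Im (A $$ (j,j) + cnj \<i> * A $$ (i,j) + \<i> * A $$ (j,i) + \<i> * cnj \<i> * A $$ (i,i)) = 0"
    using psd_pair[OF assms, of \<i>] by (simp add: less_eq_complex_def)
  show ?thesis using 1 2 di dj by (simp add: complex_eq_iff)
qed

lemma psd_zero_row: assumes "psd n A" "i < n" "j < n" "A $$ (i,i) = 0"
  shows "A $$ (i,j) = 0"
proof (rule ccontr)
  define b where "b = A $$ (i,j)"
  define c where "c = Re (A $$ (j,j))"
  assume "A $$ (i,j) \<noteq> 0"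
  hence b0: "b \<noteq> 0" unfolding b_def .
  have hji: "A $$ (j,i) = cnj b" using psd_herm[OF assms(1-3)] b_def by simp
  have c0: "c \<ge> 0" "Im (A $$ (j,j)) = 0" using psd_diag[OF assms(1,3)] by (auto simp: c_def less_eq_complex_def)
  define r where "r = (c+1) / (cmod b)^2"
  have nb: "(cmod b)^2 > 0" using b0 by simp
  have rb: "r * (cmod b)^2 = c + 1" unfolding r_def using nb by simp
  define t where "t = - (complex_of_real r) * b"
  have "0 \<le> A $$ (j,j) + cnj t * A $$ (i,j) + t * A $$ (j,i) + t * cnj t * A $$ (i,i)"
    by (rule psd_pair[OF assms(1-3)])
  hence "0 \<le> Re (A $$ (j,j) + cnj t * b + t * cnj b)" using assms(4) hji b_def
    by (simp add: less_eq_complex_def)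
  also have "Re (A $$ (j,j) + cnj t * b + t * cnj b) = c - 2 * (r * (cmod b)^2)"
  proof -
    have h: "cmod b * cmod b = Re b * Re b + Im b * Im b"
      using cmod_power2[of b] by (simp add: power2_eq_square)
    show ?thesis unfolding t_def c_def by (simp add: algebra_simps power2_eq_square h)
  qed
  finally show False using rb c0 by simp
qed

lemma csp_Qf: assumes "A \<in> carrier_mat n n"
  shows "cscalar_prod (A *\<^sub>v vec n w) (vec n w) = Qf A n w"
  using assms unfolding Qf_def scalar_prod_def
  by (auto simp: scalar_prod_def atLeast0LessThan sum_distrib_left sum_distrib_right mult_ac intro!: sum.cong)

lemma psd_iff_Qf: "psd n A \<longleftrightarrow> A \<in> carrier_mat n n \<and> (\<forall>w. 0 \<le> Qf A n w)"
proof
  assume "psd n A" thus "A \<in> carrier_mat n n \<and> (\<forall>w. 0 \<le> Qf A n w)"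
    using psd_Qf unfolding psd_def by blast
next
  assume a: "A \<in> carrier_mat n n \<and> (\<forall>w. 0 \<le> Qf A n w)"
  { fix v :: "complex vec" assume v: "v \<in> carrier_vec n"
    have "v = vec n (\<lambda>k. v $ k)" using v by auto
    hence "cscalar_prod (A *\<^sub>v v) v = Qf A n (\<lambda>k. v $ k)" using csp_Qf[of A n] a by metis
    hence "0 \<le> cscalar_prod (A *\<^sub>v v) v" using a by simp }
  thus "psd n A" using a unfolding psd_def by blast
qed

lemma psd_step: assumes "psd n A" "i < n" "A $$ (i,i) \<noteq> 0"
  shows "psd n (mat n n (\<lambda>(p,q). A $$ (p,q) - A $$ (p,i) * A $$ (i,q) / A $$ (i,i)))"
  unfolding psd_iff_Qf
proof (intro conjI allI)
  fix w
  define a where "a = A $$ (i,i)"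
  define b where "b = (\<Sum>q<n. A $$ (i,q) * w q)"
  have a0: "a \<noteq> 0" using assms a_def by simp
  have ca: "cnj a = a" using psd_diag[OF assms(1,2)] unfolding a_def
    by (simp add: less_eq_complex_def complex_eq_iff)
  have cb: "(\<Sum>p<n. A $$ (p,i) * cnj (w p)) = cnj b"
    unfolding b_def cnj_sum using psd_herm[OF assms(1,2)] by (intro sum.cong) auto
  have "Qf (mat n n (\<lambda>(p,q). A $$ (p,q) - A $$ (p,i) * A $$ (i,q) / A $$ (i,i))) n w
     = Qf A n w - (\<Sum>p<n. A $$ (p,i) * cnj (w p)) * (\<Sum>q<n. A $$ (i,q) * w q) / a"
    unfolding Qf_def a_def
    by (simp add: sum_distrib_left sum_distrib_right sum_subtractf algebra_simps diff_divide_distrib sum_divide_distrib)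
  also have "\<dots> = Qf A n w - cnj b * b / a" using cb b_def by simp
  finally have eq: "Qf (mat n n (\<lambda>(p,q). A $$ (p,q) - A $$ (p,i) * A $$ (i,q) / A $$ (i,i))) n w = Qf A n w - cnj b * b / a" .
  define t where "t = - b / a"
  have "0 \<le> Qf A n (\<lambda>k. w k + t * ee i k)" by (rule psd_Qf[OF assms(1)])
  also have "\<dots> = Qf A n w + cnj t * b + t * cnj b + t * cnj t * a"
    using Qf_expand[OF assms(2), of A w t] cb unfolding a_def b_def by simp
  also have "\<dots> = Qf A n w - cnj b * b / a"
    unfolding t_def using a0 ca by (simp add: field_simps power2_eq_square)
  finally show "0 \<le> Qf (mat n n (\<lambda>(p,q). A $$ (p,q) - A $$ (p,i) * A $$ (i,q) / A $$ (i,i))) n w"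
    using eq by simp
qed auto

definition gram :: "nat \<Rightarrow> complex mat \<Rightarrow> bool" where
  "gram n A \<longleftrightarrow> A \<in> carrier_mat n n \<and> (\<exists>(I::nat set) f. finite I \<and>
     (\<forall>i<n. \<forall>j<n. A $$ (i,j) = (\<Sum>k\<in>I. f k i * cnj (f k j))))"

lemma psd_gram_aux: "\<forall>A. psd n A \<and> card {k. k < n \<and> A $$ (k,k) \<noteq> 0} = m \<longrightarrow> gram n A"
proof (induction m rule: less_induct)
  case (less m)
  show ?case
  proof (intro allI impI, elim conjE)
    fix A assume psd: "psd n A" and m: "card {k. k < n \<and> A $$ (k,k) \<noteq> 0} = m"
    have Ac: "A \<in> carrier_mat n n" using psd unfolding psd_def by auto
    show "gram n A"
    proof (cases "\<forall>k<n. A $$ (k,k) = 0")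
      case True
      hence "\<forall>i<n. \<forall>j<n. A $$ (i,j) = (\<Sum>k\<in>{}. (\<lambda>_ _. 0) k i * cnj ((\<lambda>_ _. 0) k j))"
        using psd_zero_row[OF psd] by simp
      thus ?thesis unfolding gram_def using Ac
        by (intro conjI exI[of _ "{}"] exI[of _ "\<lambda>_ _. 0"]) auto
    next
      case False
      then obtain i where i: "i < n" "A $$ (i,i) \<noteq> 0" by auto
      define a where "a = A $$ (i,i)"
      define A' where "A' = mat n n (\<lambda>(p,q). A $$ (p,q) - A $$ (p,i) * A $$ (i,q) / A $$ (i,i))"
      have psd': "psd n A'" unfolding A'_def by (rule psd_step[OF psd i])
      have sub: "{k. k < n \<and> A' $$ (k,k) \<noteq> 0} \<subseteq> {k. k < n \<and> A $$ (k,k) \<noteq> 0} - {i}"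
      proof
        fix k assume k: "k \<in> {k. k < n \<and> A' $$ (k,k) \<noteq> 0}"
        hence kn: "k < n" and nz: "A' $$ (k,k) \<noteq> 0" by auto
        have "k \<noteq> i" using nz i unfolding A'_def by auto
        moreover have "A $$ (k,k) \<noteq> 0"
        proof
          assume "A $$ (k,k) = 0"
          hence "A $$ (k,i) = 0" using psd_zero_row[OF psd kn i(1)] by simp
          thus False using nz kn \<open>A $$ (k,k) = 0\<close> unfolding A'_def by simp
        qed
        ultimately show "k \<in> {k. k < n \<and> A $$ (k,k) \<noteq> 0} - {i}" using kn by simp
      qed
      have cardlt: "card {k. k < n \<and> A' $$ (k,k) \<noteq> 0} < m"
      proof -
        have "card {k. k < n \<and> A' $$ (k,k) \<noteq> 0} \<le> card ({k. k < n \<and> A $$ (k,k) \<noteq> 0} - {i})"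
          by (rule card_mono[OF _ sub]) (simp add: finite_Collect_conjI)
        also have "\<dots> < m" using i m
          using card_Diff1_less[of "{k. k < n \<and> A $$ (k,k) \<noteq> 0}" i] by (simp add: finite_Collect_conjI)
        finally show ?thesis .
      qed
      have "gram n A'" using less.IH[OF cardlt, THEN spec, of A'] psd' by simp
      then obtain I :: "nat set" and f :: "nat \<Rightarrow> nat \<Rightarrow> complex" where I: "finite I" and f: "\<forall>p<n. \<forall>q<n. A' $$ (p,q) = (\<Sum>k\<in>I. f k p * cnj (f k q))"
        unfolding gram_def by blast
      define s where "s = complex_of_real (sqrt (Re a))"
      have are: "Im a = 0" "Re a \<ge> 0" using psd_diag[OF psd i(1)] unfolding a_def by (auto simp: less_eq_complex_def)
      have ss: "s * s = a" unfolding s_def using are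
        by (simp add: complex_eq_iff flip: of_real_mult)
      have cs: "cnj s = s" unfolding s_def by simp
      define v where "v = (\<lambda>p. A $$ (p,i) / s)"
      define g where "g = (\<lambda>k. if k = 0 then v else f (k - 1))"
      have "\<forall>p<n. \<forall>q<n. A $$ (p,q) = (\<Sum>k\<in>insert 0 (Suc ` I). g k p * cnj (g k q))"
      proof (intro allI impI)
        fix p q assume p: "p < n" and q: "q < n"
        have "(\<Sum>k\<in>insert 0 (Suc ` I). g k p * cnj (g k q)) = v p * cnj (v q) + (\<Sum>k\<in>I. f k p * cnj (f k q))"
          using I by (simp add: g_def sum.reindex)
        also have "\<dots> = A $$ (p,i) * A $$ (i,q) / a + A' $$ (p,q)"
          using f p q psd_herm[OF psd q i(1)] ss cs by (simp add: v_def a_def)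
        also have "\<dots> = A $$ (p,q)" unfolding A'_def a_def using p q by simp
        finally show "A $$ (p,q) = (\<Sum>k\<in>insert 0 (Suc ` I). g k p * cnj (g k q))" by simp
      qed
      thus ?thesis unfolding gram_def using Ac I
        by (intro conjI exI[of _ "insert 0 (Suc ` I)"] exI[of _ g]) auto
    qed
  qed
qed

lemma psd_gram: "psd n A \<Longrightarrow> gram n A"
  using psd_gram_aux[of n] by simp

lemma sum3_swap: "(\<Sum>q\<in>Q. \<Sum>p\<in>P. \<Sum>k\<in>K. F q p k) = (\<Sum>k\<in>K. \<Sum>p\<in>P. \<Sum>q\<in>Q. (F q p k :: complex))"
proof -
  have "(\<Sum>q\<in>Q. \<Sum>p\<in>P. \<Sum>k\<in>K. F q p k) = (\<Sum>q\<in>Q. \<Sum>k\<in>K. \<Sum>p\<in>P. F q p k)"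
    by (intro sum.cong refl sum.swap)
  also have "\<dots> = (\<Sum>k\<in>K. \<Sum>q\<in>Q. \<Sum>p\<in>P. F q p k)" by (rule sum.swap)
  also have "\<dots> = (\<Sum>k\<in>K. \<Sum>p\<in>P. \<Sum>q\<in>Q. F q p k)" by (intro sum.cong refl sum.swap)
  finally show ?thesis .
qed

lemma gram_pairs: assumes "finite (S :: (nat \<times> nat) set)"
  shows "\<exists>(I::nat set) (f::nat \<Rightarrow> nat \<Rightarrow> complex). finite I \<and>
     (\<forall>i j. (\<Sum>p\<in>S. g p i * cnj (g p j)) = (\<Sum>k\<in>I. f k i * cnj (f k j)))"
proof -
  have 1: "finite (prod_encode ` S)" using assms by simp
  have 2: "(\<Sum>p\<in>S. g p i * cnj (g p j)) = (\<Sum>k\<in>prod_encode ` S. g (prod_decode k) i * cnj (g (prod_decode k) j))" for i j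
    by (subst sum.reindex) (auto intro: inj_on_subset[OF inj_prod_encode])
  show ?thesis
    apply (rule exI[of _ "prod_encode ` S"])
    apply (rule exI[of _ "\<lambda>k. g (prod_decode k)"])
    using 1 2 by simp
qed

lemma gram_kron: assumes "gram n1 A" "gram n2 B" shows "gram (n1*n2) (kron A B)"
proof -
  from assms(1) obtain I1 :: "nat set" and f1 :: "nat \<Rightarrow> nat \<Rightarrow> complex" where
    A: "A \<in> carrier_mat n1 n1" and I1: "finite I1" and f1: "\<forall>i<n1. \<forall>j<n1. A $$ (i,j) = (\<Sum>k\<in>I1. f1 k i * cnj (f1 k j))"
    unfolding gram_def by blast
  from assms(2) obtain I2 :: "nat set" and f2 :: "nat \<Rightarrow> nat \<Rightarrow> complex" where
    B: "B \<in> carrier_mat n2 n2" and I2: "finite I2" and f2: "\<forall>i<n2. \<forall>j<n2. B $$ (i,j) = (\<Sum>k\<in>I2. f2 k i * cnj (f2 k j))"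
    unfolding gram_def by blast
  define g where "g = (\<lambda>(k1,k2) i. f1 k1 (i div n2) * f2 k2 (i mod n2))"
  obtain I :: "nat set" and f :: "nat \<Rightarrow> nat \<Rightarrow> complex" where I: "finite I"
    and f: "\<forall>i j. (\<Sum>p\<in>I1 \<times> I2. g p i * cnj (g p j)) = (\<Sum>k\<in>I. f k i * cnj (f k j))"
    using gram_pairs[of "I1 \<times> I2" g] I1 I2 by blast
  have "\<forall>i<n1*n2. \<forall>j<n1*n2. kron A B $$ (i,j) = (\<Sum>k\<in>I. f k i * cnj (f k j))"
  proof (intro allI impI)
    fix i j assume i: "i < n1*n2" and j: "j < n1*n2"
    have n2: "n2 > 0" using i by (cases n2) auto
    have id: "i div n2 < n1" "j div n2 < n1" using i j by (auto simp: less_mult_imp_div_less)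
    have im: "i mod n2 < n2" "j mod n2 < n2" using n2 by auto
    have "kron A B $$ (i,j) = A $$ (i div n2, j div n2) * B $$ (i mod n2, j mod n2)"
      using A B i j by (simp add: kron_index)
    also have "\<dots> = (\<Sum>k1\<in>I1. f1 k1 (i div n2) * cnj (f1 k1 (j div n2))) * (\<Sum>k2\<in>I2. f2 k2 (i mod n2) * cnj (f2 k2 (j mod n2)))"
      using f1 f2 id im by simp
    also have "\<dots> = (\<Sum>p\<in>I1 \<times> I2. g p i * cnj (g p j))"
      unfolding sum_product sum.cartesian_product g_def by (intro sum.cong) (auto simp: mult_ac)
    finally show "kron A B $$ (i,j) = (\<Sum>k\<in>I. f k i * cnj (f k j))" using f by simp
  qed
  thus ?thesis unfolding gram_def using kron_carrier[OF A B] I by blast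
qed

lemma KMK_gram: assumes K: "K \<in> carrier_mat d n" and M: "M \<in> carrier_mat n n" and i: "i < d" and j: "j < d"
  and f: "\<forall>p<n. \<forall>q<n. M $$ (p,q) = (\<Sum>k\<in>I. f k p * cnj (f k q))"
  shows "(K * M * adj K) $$ (i,j) = (\<Sum>k\<in>I. (\<Sum>p<n. K $$ (i,p) * f k p) * cnj (\<Sum>p<n. K $$ (j,p) * f k p))"
proof -
  have "(K * M * adj K) $$ (i,j) = (\<Sum>q<n. \<Sum>p<n. \<Sum>k\<in>I. K $$ (i,p) * f k p * (cnj (K $$ (j,q)) * cnj (f k q)))"
    using KMK_index[OF K M i j] f by (simp add: sum_distrib_left sum_distrib_right mult_ac)
  also have "\<dots> = (\<Sum>k\<in>I. \<Sum>p<n. \<Sum>q<n. K $$ (i,p) * f k p * (cnj (K $$ (j,q)) * cnj (f k q)))"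
    by (rule sum3_swap)
  also have "\<dots> = (\<Sum>k\<in>I. (\<Sum>p<n. K $$ (i,p) * f k p) * cnj (\<Sum>p<n. K $$ (j,p) * f k p))"
    by (simp add: sum_product cnj_sum)
  finally show ?thesis .
qed

lemma gram_qapply: assumes Ks: "\<forall>K\<in>set Ks. K \<in> carrier_mat d n" and M: "gram n M"
  shows "gram d (qapply d Ks M)"
proof -
  from M obtain I :: "nat set" and f :: "nat \<Rightarrow> nat \<Rightarrow> complex" where
    Mc: "M \<in> carrier_mat n n" and I: "finite I" and f: "\<forall>p<n. \<forall>q<n. M $$ (p,q) = (\<Sum>k\<in>I. f k p * cnj (f k q))"
    unfolding gram_def by blast
  define g where "g = (\<lambda>(t,k) i. (\<Sum>p<n. (Ks ! t) $$ (i,p) * f k p))"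
  obtain J :: "nat set" and h :: "nat \<Rightarrow> nat \<Rightarrow> complex" where J: "finite J"
    and h: "\<forall>i j. (\<Sum>p\<in>{..<length Ks} \<times> I. g p i * cnj (g p j)) = (\<Sum>k\<in>J. h k i * cnj (h k j))"
    using gram_pairs[of "{..<length Ks} \<times> I" g] I by blast
  have "\<forall>i<d. \<forall>j<d. qapply d Ks M $$ (i,j) = (\<Sum>k\<in>J. h k i * cnj (h k j))"
  proof (intro allI impI)
    fix i j assume i: "i < d" and j: "j < d"
    have "qapply d Ks M $$ (i,j) = (\<Sum>K\<leftarrow>Ks. (K * M * adj K) $$ (i,j))"
      unfolding qapply_def using i j by simp
    also have "\<dots> = (\<Sum>t<length Ks. (Ks ! t * M * adj (Ks ! t)) $$ (i,j))"
      by (simp add: sum_list_sum_nth atLeast0LessThan)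
    also have "\<dots> = (\<Sum>t<length Ks. \<Sum>k\<in>I. g (t,k) i * cnj (g (t,k) j))"
      using KMK_gram[OF _ Mc i j f] Ks unfolding g_def by (intro sum.cong) auto
    also have "\<dots> = (\<Sum>p\<in>{..<length Ks} \<times> I. g p i * cnj (g p j))"
      by (simp add: sum.cartesian_product)
    finally show "qapply d Ks M $$ (i,j) = (\<Sum>k\<in>J. h k i * cnj (h k j))" using h by simp
  qed
  moreover have "qapply d Ks M \<in> carrier_mat d d" unfolding qapply_def by simp
  ultimately show ?thesis unfolding gram_def using J by blast
qed

lemma gram_trace: assumes "gram n A" "psd n R" shows "0 \<le> mtrace (A * R)"
proof -
  from assms(1) obtain I :: "nat set" and f :: "nat \<Rightarrow> nat \<Rightarrow> complex" where
    A: "A \<in> carrier_mat n n" and I: "finite I" and f: "\<forall>p<n. \<forall>q<n. A $$ (p,q) = (\<Sum>k\<in>I. f k p * cnj (f k q))"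
    unfolding gram_def by blast
  have R: "R \<in> carrier_mat n n" using assms(2) unfolding psd_def by auto
  have "mtrace (A * R) = (\<Sum>i<n. \<Sum>j<n. \<Sum>k\<in>I. R $$ (j,i) * f k i * cnj (f k j))"
    using mtrace_mult[OF A R] f by (simp add: sum_distrib_left sum_distrib_right mult_ac)
  also have "\<dots> = (\<Sum>k\<in>I. \<Sum>j<n. \<Sum>i<n. R $$ (j,i) * f k i * cnj (f k j))"
    by (rule sum3_swap)
  also have "\<dots> = (\<Sum>k\<in>I. Qf R n (f k))" unfolding Qf_def by simp
  finally show ?thesis using psd_Qf[OF assms(2)] by (simp add: sum_nonneg)
qed

lemma ceval_cong: "(\<forall>k\<in>set (leaves C). x k = y k) \<Longrightarrow> ceval C x = ceval C y"
  by (induction C) auto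

lemma ceval_carrier: "pos_unital \<Omega> C \<Longrightarrow> (\<forall>k\<in>set (leaves C). x k \<in> \<Omega> k) \<Longrightarrow>
   ceval C x \<in> carrier_mat (cdim C) (cdim C)"
  by (induction C) (auto simp: povm_def psd_def qapply_def)

lemma ceval_gram: "pos_unital \<Omega> C \<Longrightarrow> (\<forall>k\<in>set (leaves C). x k \<in> \<Omega> k) \<Longrightarrow>
   gram (cdim C) (ceval C x)"
proof (induction C)
  case (CLeaf k d E)
  thus ?case by (auto simp: povm_def intro: psd_gram)
next
  case (CNode d Ks l r)
  have "gram (cdim l * cdim r) (kron (ceval l x) (ceval r x))"
    using CNode by (auto intro: gram_kron)
  moreover have "\<forall>K\<in>set Ks. K \<in> carrier_mat d (cdim l * cdim r)"
    using CNode.prems by (simp add: unital_qop_def qop_def)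
  ultimately show ?case by (simp add: gram_qapply)
qed

lemma sum_PiE_Un: assumes "A \<inter> B = {}"
  shows "(\<Sum>x\<in>PiE (A \<union> B) \<Omega>. F (restrict x A) (restrict x B)) =
         (\<Sum>x1\<in>PiE A \<Omega>. \<Sum>x2\<in>PiE B \<Omega>. (F x1 x2 :: complex))"
proof -
  have "(\<Sum>x\<in>PiE (A \<union> B) \<Omega>. F (restrict x A) (restrict x B)) = (\<Sum>(x1,x2)\<in>PiE A \<Omega> \<times> PiE B \<Omega>. F x1 x2)"
  proof (rule sum.reindex_bij_witness[of _ "\<lambda>(x1,x2) k. if k \<in> A then x1 k else x2 k" "\<lambda>x. (restrict x A, restrict x B)"])
    fix x assume x: "x \<in> PiE (A \<union> B) \<Omega>"
    show "(\<lambda>(x1,x2) k. if k \<in> A then x1 k else x2 k) (restrict x A, restrict x B) = x"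
      using x by (auto simp: fun_eq_iff PiE_iff extensional_def)
    show "(restrict x A, restrict x B) \<in> PiE A \<Omega> \<times> PiE B \<Omega>" using x by (auto simp: PiE_iff)
    show "(case (restrict x A, restrict x B) of (x1, x2) \<Rightarrow> F x1 x2) = F (restrict x A) (restrict x B)" by simp
  next
    fix p assume p: "p \<in> PiE A \<Omega> \<times> PiE B \<Omega>"
    obtain x1 x2 where p': "p = (x1,x2)" by (cases p)
    show "(\<lambda>x. (restrict x A, restrict x B)) ((\<lambda>(x1,x2) k. if k \<in> A then x1 k else x2 k) p) = p"
      using p p' assms by (auto simp: fun_eq_iff PiE_iff extensional_def restrict_def)
    show "(\<lambda>(x1,x2) k. if k \<in> A then x1 k else x2 k) p \<in> PiE (A \<union> B) \<Omega>"
      using p p' by (auto simp: PiE_iff extensional_def)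
  qed
  also have "\<dots> = (\<Sum>x1\<in>PiE A \<Omega>. \<Sum>x2\<in>PiE B \<Omega>. F x1 x2)"
    by (rule sum.cartesian_product[symmetric])
  finally show ?thesis .
qed

lemma sum_PiE_single: "(\<Sum>x\<in>PiE {k} \<Omega>. G (x k)) = (\<Sum>v\<in>\<Omega> k. (G v :: complex))"
proof (rule sum.reindex_bij_witness[of _ "\<lambda>v. (\<lambda>j\<in>{k}. v)" "\<lambda>x. x k"])
  fix x assume "x \<in> PiE {k} \<Omega>"
  thus "(\<lambda>j\<in>{k}. x k) = x" by (auto simp: fun_eq_iff PiE_iff extensional_def)
qed auto

lemma sum_list_swap: "(\<Sum>x\<in>X. \<Sum>K\<leftarrow>Ks. g x K) = (\<Sum>K\<leftarrow>Ks. \<Sum>x\<in>X. (g x K :: complex))"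
  by (induction Ks) (auto simp: sum.distrib)

lemma kron_sum_id:
  assumes L: "set (leaves l) \<inter> set (leaves r) = {}"
    and pl: "pos_unital \<Omega> l" and pr: "pos_unital \<Omega> r"
    and IHl: "\<And>p q. p < cdim l \<Longrightarrow> q < cdim l \<Longrightarrow> (\<Sum>x\<in>PiE (set (leaves l)) \<Omega>. ceval l x $$ (p,q)) = 1\<^sub>m (cdim l) $$ (p,q)"
    and IHr: "\<And>p q. p < cdim r \<Longrightarrow> q < cdim r \<Longrightarrow> (\<Sum>x\<in>PiE (set (leaves r)) \<Omega>. ceval r x $$ (p,q)) = 1\<^sub>m (cdim r) $$ (p,q)"
    and a: "a < cdim l * cdim r" and b: "b < cdim l * cdim r"
  shows "(\<Sum>x\<in>PiE (set (leaves l) \<union> set (leaves r)) \<Omega>. kron (ceval l x) (ceval r x) $$ (a,b))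
     = 1\<^sub>m (cdim l * cdim r) $$ (a,b)"
proof -
  let ?n1 = "cdim l" and ?n2 = "cdim r" and ?L1 = "set (leaves l)" and ?L2 = "set (leaves r)"
  have n2: "?n2 > 0" using a by (cases "?n2") auto
  have ad: "a div ?n2 < ?n1" "b div ?n2 < ?n1" using a b by (auto simp: less_mult_imp_div_less)
  have am: "a mod ?n2 < ?n2" "b mod ?n2 < ?n2" using n2 by auto
  define F where "F = (\<lambda>x1 x2. ceval l x1 $$ (a div ?n2, b div ?n2) * ceval r x2 $$ (a mod ?n2, b mod ?n2))"
  have "(\<Sum>x\<in>PiE (?L1 \<union> ?L2) \<Omega>. kron (ceval l x) (ceval r x) $$ (a,b))
      = (\<Sum>x\<in>PiE (?L1 \<union> ?L2) \<Omega>. F (restrict x ?L1) (restrict x ?L2))"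
  proof (rule sum.cong[OF refl])
    fix x assume x: "x \<in> PiE (?L1 \<union> ?L2) \<Omega>"
    have cl: "ceval l x \<in> carrier_mat ?n1 ?n1" using ceval_carrier[OF pl] x by (auto simp: PiE_iff)
    have cr: "ceval r x \<in> carrier_mat ?n2 ?n2" using ceval_carrier[OF pr] x by (auto simp: PiE_iff)
    have "ceval l (restrict x ?L1) = ceval l x" by (rule ceval_cong) simp
    moreover have "ceval r (restrict x ?L2) = ceval r x" by (rule ceval_cong) simp
    ultimately show "kron (ceval l x) (ceval r x) $$ (a,b) = F (restrict x ?L1) (restrict x ?L2)"
      unfolding F_def using cl cr a b by (simp add: kron_index)
  qed
  also have "\<dots> = (\<Sum>x1\<in>PiE ?L1 \<Omega>. \<Sum>x2\<in>PiE ?L2 \<Omega>. F x1 x2)" by (rule sum_PiE_Un[OF L])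
  also have "\<dots> = (\<Sum>x1\<in>PiE ?L1 \<Omega>. ceval l x1 $$ (a div ?n2, b div ?n2)) * (\<Sum>x2\<in>PiE ?L2 \<Omega>. ceval r x2 $$ (a mod ?n2, b mod ?n2))"
    unfolding F_def by (simp add: sum_product)
  also have "\<dots> = 1\<^sub>m ?n1 $$ (a div ?n2, b div ?n2) * 1\<^sub>m ?n2 $$ (a mod ?n2, b mod ?n2)"
    using IHl[OF ad] IHr[OF am] by simp
  also have "\<dots> = 1\<^sub>m (?n1 * ?n2) $$ (a,b)"
    using ad am a b by (simp, metis div_mult_mod_eq)
  finally show ?thesis .
qed

lemma ceval_sum: "pos_unital \<Omega> C \<Longrightarrow> distinct (leaves C) \<Longrightarrow> (\<forall>k\<in>set (leaves C). finite (\<Omega> k)) \<Longrightarrow>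
  p < cdim C \<Longrightarrow> q < cdim C \<Longrightarrow>
  (\<Sum>x\<in>PiE (set (leaves C)) \<Omega>. ceval C x $$ (p,q)) = 1\<^sub>m (cdim C) $$ (p,q)"
proof (induction C arbitrary: p q)
  case (CLeaf k d E)
  have "(\<Sum>x\<in>PiE {k} \<Omega>. E (x k) $$ (p,q)) = (\<Sum>v\<in>\<Omega> k. E v $$ (p,q))"
    by (rule sum_PiE_single)
  also have "\<dots> = msum d d E (\<Omega> k) $$ (p,q)" using CLeaf by (simp add: msum_def)
  also have "\<dots> = 1\<^sub>m d $$ (p,q)" using CLeaf by (simp add: povm_def)
  finally show ?case by simp
next
  case (CNode d Ks l r)
  let ?n = "cdim l * cdim r" and ?L = "set (leaves l) \<union> set (leaves r)"
  have pl: "pos_unital \<Omega> l" and pr: "pos_unital \<Omega> r" and u: "unital_qop ?n d Ks"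
    using CNode.prems by auto
  have Ks: "\<forall>K\<in>set Ks. K \<in> carrier_mat d ?n" using u by (simp add: unital_qop_def qop_def)
  have L: "set (leaves l) \<inter> set (leaves r) = {}" using CNode.prems by simp
  have p: "p < d" and q: "q < d" using CNode.prems by auto
  have ks: "kron (ceval l x) (ceval r x) \<in> carrier_mat ?n ?n" if "x \<in> PiE ?L \<Omega>" for x
    using that ceval_carrier[OF pl, of x] ceval_carrier[OF pr, of x]
    by (intro kron_carrier) (auto simp: PiE_iff)
  have kid: "(\<Sum>x\<in>PiE ?L \<Omega>. kron (ceval l x) (ceval r x) $$ (a,b)) = 1\<^sub>m ?n $$ (a,b)"
    if "a < ?n" "b < ?n" for a b
    using kron_sum_id[OF L pl pr _ _ that] CNode by auto
  have "(\<Sum>x\<in>PiE ?L \<Omega>. qapply d Ks (kron (ceval l x) (ceval r x)) $$ (p,q))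
     = (\<Sum>x\<in>PiE ?L \<Omega>. \<Sum>K\<leftarrow>Ks. \<Sum>b<?n. \<Sum>a<?n. K $$ (p,a) * kron (ceval l x) (ceval r x) $$ (a,b) * cnj (K $$ (q,b)))"
  proof (rule sum.cong[OF refl])
    fix x assume x: "x \<in> PiE ?L \<Omega>"
    show "qapply d Ks (kron (ceval l x) (ceval r x)) $$ (p,q) = (\<Sum>K\<leftarrow>Ks. \<Sum>b<?n. \<Sum>a<?n. K $$ (p,a) * kron (ceval l x) (ceval r x) $$ (a,b) * cnj (K $$ (q,b)))"
      unfolding qapply_def using p q Ks KMK_index[OF _ ks[OF x] p q]
      by (simp cong: map_cong)
  qed
  also have "\<dots> = (\<Sum>K\<leftarrow>Ks. \<Sum>b<?n. \<Sum>a<?n. K $$ (p,a) * (\<Sum>x\<in>PiE ?L \<Omega>. kron (ceval l x) (ceval r x) $$ (a,b)) * cnj (K $$ (q,b)))"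
    by (simp add: sum_list_swap sum_distrib_left sum_distrib_right sum.swap[of _ "PiE ?L \<Omega>"])
  also have "\<dots> = (\<Sum>K\<leftarrow>Ks. \<Sum>b<?n. \<Sum>a<?n. K $$ (p,a) * 1\<^sub>m ?n $$ (a,b) * cnj (K $$ (q,b)))"
    using kid by simp
  also have "\<dots> = (\<Sum>K\<leftarrow>Ks. (K * 1\<^sub>m ?n * adj K) $$ (p,q))"
  proof (intro arg_cong[where f=sum_list] map_cong refl)
    fix K assume "K \<in> set Ks"
    hence K: "K \<in> carrier_mat d ?n" using Ks by simp
    show "(\<Sum>b<?n. \<Sum>a<?n. K $$ (p,a) * 1\<^sub>m ?n $$ (a,b) * cnj (K $$ (q,b))) = (K * 1\<^sub>m ?n * adj K) $$ (p,q)"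
      by (rule KMK_index[OF K one_carrier_mat p q, symmetric])
  qed
  also have "\<dots> = qapply d Ks (1\<^sub>m ?n) $$ (p,q)"
    unfolding qapply_def using p q by simp
  also have "\<dots> = 1\<^sub>m d $$ (p,q)" using u by (simp add: unital_qop_def)
  finally show ?case by simp
qed

theorem theorem2:
  fixes N :: nat and \<Omega> :: "nat \<Rightarrow> nat set" and C :: circ and \<rho> :: "complex mat"
  assumes "\<And>k. k < N \<Longrightarrow> finite (\<Omega> k)"
    and "partition_circ N C"
    and "pos_unital \<Omega> C"
    and "density (cdim C) \<rho>"
  shows "(\<forall>x \<in> PiE {..<N} \<Omega>. 0 \<le> mtrace (ceval C x * \<rho>))
       \<and> (\<Sum>x \<in> PiE {..<N} \<Omega>. mtrace (ceval C x * \<rho>)) = 1"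
proof
  let ?n = "cdim C"
  have L: "set (leaves C) = {..<N}" and D: "distinct (leaves C)" using assms(2) unfolding partition_circ_def by auto
  have psdR: "psd ?n \<rho>" and tr: "mtrace \<rho> = 1" using assms(4) unfolding density_def by auto
  have R: "\<rho> \<in> carrier_mat ?n ?n" using psdR unfolding psd_def by auto
  have xin: "\<forall>k\<in>set (leaves C). x k \<in> \<Omega> k" if "x \<in> PiE {..<N} \<Omega>" for x
    using that L by (auto simp: PiE_iff)
  show "\<forall>x \<in> PiE {..<N} \<Omega>. 0 \<le> mtrace (ceval C x * \<rho>)"
    using gram_trace[OF ceval_gram[OF assms(3)] psdR] xin by blast
  have S: "(\<Sum>x\<in>PiE {..<N} \<Omega>. ceval C x $$ (i,j)) = 1\<^sub>m ?n $$ (i,j)" if "i < ?n" "j < ?n" for i j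
    using ceval_sum[OF assms(3) D _ that] assms(1) L by auto
  have "(\<Sum>x \<in> PiE {..<N} \<Omega>. mtrace (ceval C x * \<rho>))
      = (\<Sum>x \<in> PiE {..<N} \<Omega>. \<Sum>i<?n. \<Sum>j<?n. ceval C x $$ (i,j) * \<rho> $$ (j,i))"
    using mtrace_mult[OF ceval_carrier[OF assms(3)] R] xin by (intro sum.cong) auto
  also have "\<dots> = (\<Sum>i<?n. \<Sum>j<?n. (\<Sum>x \<in> PiE {..<N} \<Omega>. ceval C x $$ (i,j)) * \<rho> $$ (j,i))"
    by (simp add: sum_distrib_right sum.swap[of _ "PiE {..<N} \<Omega>"])
  also have "\<dots> = (\<Sum>i<?n. \<Sum>j<?n. 1\<^sub>m ?n $$ (i,j) * \<rho> $$ (j,i))"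
    using S by simp
  also have "\<dots> = (\<Sum>i<?n. \<rho> $$ (i,i))"
  proof -
    have e: "(if P then 1 else 0) * (z::complex) = (if P then z else 0)" for P z by simp
    show ?thesis by (simp add: e)
  qed
  also have "\<dots> = 1" using tr R unfolding mtrace_def by simp
  finally show "(\<Sum>x \<in> PiE {..<N} \<Omega>. mtrace (ceval C x * \<rho>)) = 1" .
qed

end
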